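(* There is an absolute constant $C>0$ such that the following holds. Let $G$ be a finite graph with $n$ vertices, and let $\epsilon>0$ satisfy $\epsilon n < n-1$. If $G$ is $\epsilon$-distance-uniform with critical distance $d$, then \[ d \le 2^{C\,\frac{\log n}{\log \epsilon^{-1}}}. \] (In the paper's notation: $d = 2^{O\left(\frac{\log n}{\log \epsilon^{-1}}\right)}$.)
   Context: For a parameter $\epsilon>0$, an $n$-vertex graph $G$ is called $\epsilon$-distance-uniform if there is a value $d$, called the critical distance, such that for every vertex $v$, all but at most $\epsilon n$ of the other vertices are at graph distance exactly $d$ from $v$. The ratio $\frac{\log n}{\log \epsilon^{-1}}$ does not depend on the base of the logarithm. *)

theory Defs
  imports Complex_Main
begin

definition is_graph :: "'a set \<Rightarrow> ('a \<Rightarrow> 'a \<Rightarrow> bool) \<Rightarrow> bool" where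
  "is_graph V E \<longleftrightarrow> finite V \<and> (\<forall>u v. E u v \<longrightarrow> u \<in> V \<and> v \<in> V)
     \<and> (\<forall>u v. E u v \<longrightarrow> E v u) \<and> (\<forall>v. \<not> E v v)"

inductive walk :: "('a \<Rightarrow> 'a \<Rightarrow> bool) \<Rightarrow> 'a \<Rightarrow> 'a \<Rightarrow> nat \<Rightarrow> bool" for E where
  walk_nil: "walk E u u 0"
| walk_step: "E u w \<Longrightarrow> walk E w v k \<Longrightarrow> walk E u v (Suc k)"

definition graph_dist_is :: "('a \<Rightarrow> 'a \<Rightarrow> bool) \<Rightarrow> 'a \<Rightarrow> 'a \<Rightarrow> nat \<Rightarrow> bool" where
  "graph_dist_is E u v d \<longleftrightarrow> walk E u v d \<and> (\<forall>k<d. \<not> walk E u v k)"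

definition distance_uniform :: "'a set \<Rightarrow> ('a \<Rightarrow> 'a \<Rightarrow> bool) \<Rightarrow> real \<Rightarrow> nat \<Rightarrow> bool" where
  "distance_uniform V E \<epsilon> d \<longleftrightarrow>
     (\<forall>v\<in>V. real (card {w \<in> V - {v}. \<not> graph_dist_is E v w d}) \<le> \<epsilon> * real (card V))"

end

theory Submission
  imports Defs
begin

lemma walk_append: "walk E u w a \<Longrightarrow> walk E w v b \<Longrightarrow> walk E u v (a+b)"
  by (induction rule: walk.induct) (auto intro: walk.intros)

lemma walk_split: "walk E u v (a+b) \<Longrightarrow> \<exists>w. walk E u w a \<and> walk E w v b"
proof (induction a arbitrary: u)
  case 0 then show ?case by (auto intro: walk.intros)
next
  case (Suc a)
  from Suc.prems obtain w where "E u w" "walk E w v (a+b)"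
    by (cases rule: walk.cases) auto
  with Suc.IH obtain z where "walk E w z a" "walk E z v b" by blast
  then show ?case using \<open>E u w\<close> by (auto intro: walk.intros)
qed

lemma walk_rev: "walk E u v k \<Longrightarrow> (\<forall>u v. E u v \<longrightarrow> E v u) \<Longrightarrow> walk E v u k"
proof (induction rule: walk.induct)
  case (walk_nil u) show ?case by (rule walk.intros)
next
  case (walk_step u w v k)
  have "walk E w u 1" using walk_step by (auto intro: walk.intros)
  from walk_append[OF walk_step.IH[OF walk_step.prems] this] show ?case by simp
qed

lemma walk_in_V: "walk E u v k \<Longrightarrow> is_graph V E \<Longrightarrow> u \<in> V \<Longrightarrow> v \<in> V"
  by (induction rule: walk.induct) (auto simp: is_graph_def)

definition gball :: "'a set \<Rightarrow> ('a \<Rightarrow> 'a \<Rightarrow> bool) \<Rightarrow> 'a \<Rightarrow> nat \<Rightarrow> 'a set" where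
  "gball V E v r = {y\<in>V. \<exists>k\<le>r. walk E v y k}"

lemma step:
  fixes V :: "'a set" and a s m :: real
  assumes G: "is_graph V E"
    and BAD: "\<forall>y\<in>V. real (card {w\<in>V. \<not> graph_dist_is E y w d}) \<le> a + 1"
    and S: "\<forall>v\<in>V. real (card {x\<in>V. graph_dist_is E v x d}) \<ge> s"
    and IH: "\<forall>z\<in>V. real (card (gball V E z (r-1))) \<ge> m" and m0: "m \<ge> 0"
    and r: "1 \<le> r" "r \<le> d" and v: "v \<in> V"
  shows "s * m \<le> (a+1) * real (card (gball V E v (2*r-1)))"
proof -
  have fin: "finite V" using G by (simp add: is_graph_def)
  have sym: "\<forall>u v. E u v \<longrightarrow> E v u" using G by (simp add: is_graph_def)
  define B where "B = gball V E v (2*r-1)"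
  define Sv where "Sv = {x\<in>V. graph_dist_is E v x d}"
  have fB: "finite B" using fin by (simp add: B_def gball_def)
  have fS: "finite Sv" using fin by (simp add: Sv_def)
  let ?f = "\<lambda>y x. of_bool (\<not> graph_dist_is E y x d) :: real"
  have "(\<Sum>y\<in>B. \<Sum>x\<in>Sv. ?f y x) \<le> (\<Sum>y\<in>B. a + 1)"
  proof (rule sum_mono)
    fix y assume y: "y \<in> B"
    then have yV: "y \<in> V" by (simp add: B_def gball_def)
    have "(\<Sum>x\<in>Sv. ?f y x) = real (card (Sv \<inter> {x. \<not> graph_dist_is E y x d}))"
      using fS by simp
    also have "\<dots> \<le> real (card {w\<in>V. \<not> graph_dist_is E y w d})"
      using fin by (auto intro!: card_mono simp: Sv_def)
    also have "\<dots> \<le> a + 1" using BAD yV by blast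
    finally show "(\<Sum>x\<in>Sv. ?f y x) \<le> a + 1" .
  qed
  also have "\<dots> = (a+1) * real (card B)" by simp
  finally have up: "(\<Sum>y\<in>B. \<Sum>x\<in>Sv. ?f y x) \<le> (a+1) * real (card B)" .
  have "(\<Sum>x\<in>Sv. m) \<le> (\<Sum>x\<in>Sv. \<Sum>y\<in>B. ?f y x)"
  proof (rule sum_mono)
    fix x assume x: "x \<in> Sv"
    then have xV: "x \<in> V" and gd: "graph_dist_is E v x d" by (auto simp: Sv_def)
    from gd have "walk E v x (r + (d-r))" using r by (simp add: graph_dist_is_def)
    then obtain z where vz: "walk E v z r" and zx: "walk E z x (d-r)"
      using walk_split[of E v x r "d-r"] by blast
    have zV: "z \<in> V" using walk_in_V[OF vz G v] .
    have sub: "gball V E z (r-1) \<subseteq> B \<inter> {y. \<not> graph_dist_is E y x d}"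
    proof
      fix y assume "y \<in> gball V E z (r-1)"
      then obtain k where yV: "y \<in> V" and k: "k \<le> r-1" and zy: "walk E z y k"
        by (auto simp: gball_def)
      have "walk E v y (r+k)" using walk_append[OF vz zy] .
      then have yB: "y \<in> B" using yV k r by (auto simp: B_def gball_def intro!: exI[of _ "r+k"])
      have w: "walk E y x (k + (d-r))"
        using walk_append[OF walk_rev[OF zy sym] zx] .
      have "k + (d-r) < d" using k r by simp
      with w have "\<not> graph_dist_is E y x d" unfolding graph_dist_is_def by blast
      with yB show "y \<in> B \<inter> {y. \<not> graph_dist_is E y x d}" by simp
    qed
    have "m \<le> real (card (gball V E z (r-1)))" using IH zV by blast
    also have "\<dots> \<le> real (card (B \<inter> {y. \<not> graph_dist_is E y x d}))"
      using sub fB by (auto intro!: card_mono)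
    also have "\<dots> = (\<Sum>y\<in>B. ?f y x)" using fB by simp
    finally show "m \<le> (\<Sum>y\<in>B. ?f y x)" .
  qed
  also have "\<dots> = (\<Sum>y\<in>B. \<Sum>x\<in>Sv. ?f y x)" by (rule sum.swap)
  finally have low: "real (card Sv) * m \<le> (a+1) * real (card B)" using up by simp
  have "s * m \<le> real (card Sv) * m" using S v m0 by (auto simp: Sv_def intro: mult_right_mono)
  with low show ?thesis by (simp add: B_def)
qed


lemma iter:
  fixes V :: "'a set" and a s q :: real
  assumes G: "is_graph V E"
    and BAD: "\<forall>y\<in>V. real (card {w\<in>V. \<not> graph_dist_is E y w d}) \<le> a + 1"
    and S: "\<forall>v\<in>V. real (card {x\<in>V. graph_dist_is E v x d}) \<ge> s"
    and q: "q > 0" and sq: "q * (a+1) \<le> s" and a1: "a + 1 > 0"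
  shows "2^k \<le> 2*d \<Longrightarrow> \<forall>v\<in>V. real (card (gball V E v (2^k-1))) \<ge> q^k"
proof (induction k)
  case 0
  have fin: "finite V" using G by (simp add: is_graph_def)
  show ?case
  proof
    fix v assume v: "v \<in> V"
    have "v \<in> gball V E v 0" using v by (auto simp: gball_def intro: walk.intros)
    moreover have "finite (gball V E v 0)" using fin by (simp add: gball_def)
    ultimately have "card (gball V E v 0) \<ge> 1"
      by (metis One_nat_def Suc_leI card_gt_0_iff empty_iff)
    then show "real (card (gball V E v (2^0-1))) \<ge> q^0" by simp
  qed
next
  case (Suc k)
  have kd: "2^k \<le> 2*d" using Suc.prems by simp
  have IH: "\<forall>z\<in>V. real (card (gball V E z (2^k-1))) \<ge> q^k" using Suc.IH[OF kd] .
  show ?case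
  proof
    fix v assume v: "v \<in> V"
    have r1: "1 \<le> (2::nat)^k" by simp
    have rd: "(2::nat)^k \<le> d" using Suc.prems by simp
    have "s * q^k \<le> (a+1) * real (card (gball V E v (2*2^k-1)))"
      using step[OF G BAD S, where r="2^k" and m="q^k" and v=v] IH q r1 rd v by auto
    moreover have "q^(Suc k) * (a+1) \<le> s * q^k"
      using sq q by (simp add: mult_right_mono mult.commute mult.left_commute)
    ultimately have "q^(Suc k) * (a+1) \<le> (a+1) * real (card (gball V E v (2*2^k-1)))"
      by linarith
    then have "q^(Suc k) \<le> real (card (gball V E v (2*2^k-1)))"
      using a1 by (simp add: mult.commute)
    then show "real (card (gball V E v (2^Suc k-1))) \<ge> q^Suc k" by simp
  qed
qed

lemma card_ge:
  assumes G: "is_graph V E" and v: "v \<in> V" and gd: "graph_dist_is E v x d"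
  shows "d + 1 \<le> card V"
proof -
  have fin: "finite V" using G by (simp add: is_graph_def)
  have "\<forall>j. \<exists>z. j \<le> d \<longrightarrow> z \<in> V \<and> walk E v z j \<and> (\<forall>i<j. \<not> walk E v z i)"
  proof
    fix j
    show "\<exists>z. j \<le> d \<longrightarrow> z \<in> V \<and> walk E v z j \<and> (\<forall>i<j. \<not> walk E v z i)"
    proof (cases "j \<le> d")
      case True
      from gd True have "walk E v x (j + (d-j))" by (simp add: graph_dist_is_def)
      then obtain z where vz: "walk E v z j" and zx: "walk E z x (d-j)"
        using walk_split[of E v x j "d-j"] by blast
      have "\<forall>i<j. \<not> walk E v z i"
      proof (intro allI impI notI)
        fix i assume "i < j" "walk E v z i"
        from walk_append[OF this(2) zx] have "walk E v x (i + (d-j))" .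
        moreover have "i + (d-j) < d" using \<open>i<j\<close> True by simp
        ultimately show False using gd unfolding graph_dist_is_def by blast
      qed
      then show ?thesis using vz walk_in_V[OF vz G v] by blast
    qed auto
  qed
  then obtain f where f: "\<And>j. j \<le> d \<Longrightarrow> f j \<in> V \<and> walk E v (f j) j \<and> (\<forall>i<j. \<not> walk E v (f j) i)"
    by metis
  have inj: "inj_on f {0..d}"
  proof (rule inj_onI)
    fix i j assume i: "i \<in> {0..d}" and j: "j \<in> {0..d}" and eq: "f i = f j"
    show "i = j"
    proof (rule ccontr)
      assume "i \<noteq> j"
      then consider "i < j" | "j < i" by linarith
      then show False
      proof cases
        case 1 then show False using f[of i] f[of j] i j eq by auto
      next
        case 2 then show False using f[of i] f[of j] i j eq by auto
      qed
    qed
  qed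
  have "f ` {0..d} \<subseteq> V" using f by auto
  then have "card (f ` {0..d}) \<le> card V" using fin by (simp add: card_mono)
  then show ?thesis using card_image[OF inj] by simp
qed

theorem theorem1:
  shows "\<exists>C::real. C > 0 \<and>
    (\<forall>(V :: nat set) E (\<epsilon>::real) (d::nat).
       is_graph V E \<longrightarrow> \<epsilon> > 0 \<longrightarrow> \<epsilon> * real (card V) < real (card V) - 1 \<longrightarrow>
       distance_uniform V E \<epsilon> d \<longrightarrow>
       real d \<le> 2 powr (C * ln (real (card V)) / ln (1 / \<epsilon>)))"
proof (intro exI[of _ 3] conjI allI impI)
  fix V :: "nat set" and E and \<epsilon> :: real and d :: nat
  assume G: "is_graph V E" and e0: "\<epsilon> > 0" and en: "\<epsilon> * real (card V) < real (card V) - 1"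
    and DU: "distance_uniform V E \<epsilon> d"
  define n where "n = card V"
  define a where "a = \<epsilon> * real n"
  have fin: "finite V" using G by (simp add: is_graph_def)
  have sym: "\<forall>u v. E u v \<longrightarrow> E v u" using G by (simp add: is_graph_def)
  have a0: "a \<ge> 0" using e0 by (simp add: a_def)
  have an: "a < real n - 1" using en by (simp add: a_def n_def)
  then have n1: "n \<ge> 1" using a0 by simp
  then have "V \<noteq> {}" using n_def by auto
  then obtain v0 where v0: "v0 \<in> V" by blast
  have e1: "\<epsilon> < 1"
  proof -
    have "\<epsilon> * real n < real n * 1" using an by (simp add: a_def)
    then show ?thesis using n1 by (simp add: mult.commute)
  qed
  have lnn: "ln (real n) \<ge> 0" using n1 by simp
  have lne: "ln (1/\<epsilon>) > 0" using e0 e1 by simp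
  define bad where "bad v = {w \<in> V - {v}. \<not> graph_dist_is E v w d}" for v
  define S' where "S' v = {w \<in> V - {v}. graph_dist_is E v w d}" for v
  have badc: "real (card (bad v)) \<le> a" if "v \<in> V" for v
    using DU that by (simp add: distance_uniform_def bad_def a_def n_def)
  have S'c: "real (card (S' v)) \<ge> real n - 1 - a" if v: "v \<in> V" for v
  proof -
    have "V - {v} \<subseteq> S' v \<union> bad v" by (auto simp: S'_def bad_def)
    then have "card (V - {v}) \<le> card (S' v \<union> bad v)" using fin by (intro card_mono) (auto simp: S'_def bad_def)
    also have "\<dots> \<le> card (S' v) + card (bad v)" by (rule card_Un_le)
    finally have "real (card (V - {v})) \<le> real (card (S' v)) + real (card (bad v))" by linarith
    moreover have "card (V - {v}) = n - 1" using v fin by (simp add: n_def)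
    ultimately show ?thesis using badc[OF v] n1 by (simp add: of_nat_diff)
  qed
  have S'ne: "S' v0 \<noteq> {}"
  proof
    assume "S' v0 = {}"
    then have "real n - 1 - a \<le> 0" using S'c[OF v0] by simp
    then show False using an by simp
  qed
  then obtain x0 where x0: "x0 \<in> S' v0" by blast
  then have x0V: "x0 \<in> V" and x0v: "x0 \<noteq> v0" and gd0: "graph_dist_is E v0 x0 d"
    by (auto simp: S'_def)
  have d1: "d \<ge> 1"
  proof (rule ccontr)
    assume "\<not> d \<ge> 1"
    then have "d = 0" by simp
    then have "walk E v0 x0 0" using gd0 by (simp add: graph_dist_is_def)
    then have "x0 = v0" by (cases rule: walk.cases) auto
    then show False using x0v by simp
  qed
  have RHS1: "1 \<le> 2 powr (3 * ln (real (card V)) / ln (1/\<epsilon>))"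
    using lnn lne by (intro ge_one_powr_ge_zero) (auto simp: n_def)
  show "real d \<le> 2 powr (3 * ln (real (card V)) / ln (1 / \<epsilon>))"
  proof (cases "a < 1")
    case True
    have "bad v0 = {}"
    proof -
      have "real (card (bad v0)) < 1" using badc[OF v0] True by simp
      then have "card (bad v0) = 0" by simp
      moreover have "finite (bad v0)" using fin by (simp add: bad_def)
      ultimately show ?thesis by simp
    qed
    from gd0 have "walk E v0 x0 d" by (simp add: graph_dist_is_def)
    then have "walk E v0 x0 (1 + (d - 1))" using d1 by simp
    then obtain w where w1: "walk E v0 w 1" using walk_split[of E v0 x0 1 "d-1"] by blast
    then obtain w' where ew: "E v0 w'" and ww: "walk E w' w 0" by (cases rule: walk.cases) auto
    from ww have "w' = w" by (cases rule: walk.cases) auto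
    with ew have "E v0 w" by simp
    then have "w \<in> V" "w \<noteq> v0" using G by (auto simp: is_graph_def)
    then have "graph_dist_is E v0 w d" using \<open>bad v0 = {}\<close> by (auto simp: bad_def)
    then have "d \<le> 1" using w1 by (auto simp: graph_dist_is_def not_less[symmetric])
    then show ?thesis using RHS1 by simp
  next
    case False
    then have a1: "a \<ge> 1" by simp
    show ?thesis
    proof (cases "\<epsilon> \<ge> 1/8")
      case True
      have "d + 1 \<le> n" using card_ge[OF G v0 gd0] by (simp add: n_def)
      then have "real d \<le> real n" by simp
      also have "\<dots> = 2 powr (log 2 (real n))" using n1 by simp
      also have "\<dots> \<le> 2 powr (3 * ln (real n) / ln (1/\<epsilon>))"
      proof (rule powr_mono)
        have "1/\<epsilon> \<le> 8" using True e0 by (simp add: field_simps)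
        then have "ln (1/\<epsilon>) \<le> ln 8" using e0 by simp
        also have "ln (8::real) = 3 * ln 2"
          using ln_realpow[of 2 3] by simp
        finally have h: "ln (1/\<epsilon>) \<le> 3 * ln 2" .
        have "ln (real n) * ln (1/\<epsilon>) \<le> ln (real n) * (3 * ln 2)"
          using h lnn by (rule mult_left_mono)
        then show "log 2 (real n) \<le> 3 * ln (real n) / ln (1/\<epsilon>)"
          using lne by (simp add: log_def field_simps)
      qed simp
      finally show ?thesis by (simp add: n_def)
    next
      case False
      define q where "q = 1 / (4*\<epsilon>)"
      have q0: "q > 0" using e0 by (simp add: q_def)
      define s where "s = real n - 1 - a"
      have sq: "q * (a+1) \<le> s"
      proof -
        have "q * (a+1) \<le> q * (2*a)" using a1 q0 by simp
        also have "\<dots> = real n / 2" using e0 by (simp add: q_def a_def)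
        also have "\<dots> \<le> real n - 2 * a" 
        proof -
          have "\<epsilon> * real n \<le> (1/8) * real n" using False by (intro mult_right_mono) auto
          then show ?thesis by (simp add: a_def)
        qed
        also have "\<dots> \<le> s" using a1 by (simp add: s_def)
        finally show ?thesis .
      qed
      have BAD: "\<forall>y\<in>V. real (card {w\<in>V. \<not> graph_dist_is E y w d}) \<le> a + 1"
      proof
        fix y assume y: "y \<in> V"
        have "{w\<in>V. \<not> graph_dist_is E y w d} \<subseteq> insert y (bad y)" by (auto simp: bad_def)
        then have "card {w\<in>V. \<not> graph_dist_is E y w d} \<le> card (insert y (bad y))"
          using fin by (intro card_mono) (auto simp: bad_def)
        also have "\<dots> \<le> card (bad y) + 1" by (simp add: card_insert_le_m1 card_insert_if)
        finally show "real (card {w\<in>V. \<not> graph_dist_is E y w d}) \<le> a + 1"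
          using badc[OF y] by linarith
      qed
      have S: "\<forall>v\<in>V. real (card {x\<in>V. graph_dist_is E v x d}) \<ge> s"
      proof
        fix v assume v: "v \<in> V"
        have "card (S' v) \<le> card {x\<in>V. graph_dist_is E v x d}"
          using fin by (intro card_mono) (auto simp: S'_def)
        then show "real (card {x\<in>V. graph_dist_is E v x d}) \<ge> s"
          using S'c[OF v] by (simp add: s_def)
      qed
      obtain k where k: "2^k \<le> d" "d < 2^(k+1)" using ex_power_ivl1[of 2 d] d1 by auto
      have "2^(k+1) \<le> 2*d" using k by simp
      from iter[OF G BAD S q0 sq _ this] a0 v0
      have "q^(k+1) \<le> real (card (gball V E v0 (2^(k+1)-1)))" by auto
      also have "\<dots> \<le> real n" using fin by (auto simp: n_def gball_def intro!: card_mono)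
      finally have qn: "q^(k+1) \<le> real n" .
      have e8: "\<epsilon> < 1/8" using False by simp
      have lnq: "ln q \<ge> ln (1/\<epsilon>) / 3"
      proof -
        have "ln q = ln (1/\<epsilon>) - ln 4" using e0 by (simp add: q_def ln_div ln_mult)
        moreover have "ln (4::real) = 2 * ln 2" using ln_realpow[of 2 2] by simp
        moreover have "ln (8::real) = 3 * ln 2" using ln_realpow[of 2 3] by simp
        moreover have "ln 8 < ln (1/\<epsilon>)" using e0 e8 by (simp add: field_simps)
        ultimately show ?thesis by linarith
      qed
      have lnq0: "ln q > 0" using lnq lne by linarith
      have qpos: "q^(k+1) > 0" using q0 by simp
      have "ln (q^(k+1)) \<le> ln (real n)" using qn qpos by simp
      then have "real (k+1) * ln q \<le> ln (real n)" by (simp only: ln_realpow)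
      then have "real (k+1) \<le> ln (real n) / ln q" using lnq0 by (simp add: field_simps)
      also have "\<dots> \<le> 3 * ln (real n) / ln (1/\<epsilon>)"
      proof -
        have "ln (real n) * ln (1/\<epsilon>) \<le> ln (real n) * (3 * ln q)"
          using lnq lnn by (intro mult_left_mono) auto
        then show ?thesis using lnq0 lne by (simp add: field_simps)
      qed
      finally have kb: "real (k+1) \<le> 3 * ln (real n) / ln (1/\<epsilon>)" .
      have "real d < 2 powr real (k+1)"
        proof -
        have "real d < real (2^(k+1))" using k(2) by (simp only: of_nat_less_iff)
        also have "\<dots> = 2 powr real (k+1)" by (simp only: of_nat_power of_nat_numeral powr_realpow[of 2 "k+1", symmetric])
        finally show ?thesis .
      qed
      also have "\<dots> \<le> 2 powr (3 * ln (real n) / ln (1/\<epsilon>))" using kb by (intro powr_mono) auto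
      finally show ?thesis by (simp add: n_def)
    qed
  qed
qed simp

end
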